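(* Let $\alpha>1$ and $f\in\mathcal{B}_1(\alpha)$. Then for every $r\in(0,1)$ and all real $\theta_1<\theta_2$, writing $z=re^{i\theta}$, \[ \int_{\theta_1}^{\theta_2}\left[\operatorname{Re}\left(1+\frac{zf''(z)}{f'(z)}\right)+(\alpha-1)\operatorname{Re}\left(\frac{zf'(z)}{f(z)}\right)\right]d\theta>-\pi, \] i.e. $\int_{\theta_1}^{\theta_2}\operatorname{Re}P[\alpha,f](re^{i\theta})\,d\theta>-\pi$.
   Context: $\mathbb{D}$ is the unit disk, $\mathcal{A}$ the class of analytic $f$ in $\mathbb{D}$ with $f(z)=z+\sum_{n\ge2}a_nz^n$, and $\mathcal{P}$ the class of analytic $h$ in $\mathbb{D}$ with $h(0)=1$, $\operatorname{Re}h>0$. For $\alpha>0$, $\mathcal{B}_1(\alpha)$ is the class of functions $f(z)=\left[\alpha\int_0^z t^{\alpha-1}h(t)\,dt\right]^{1/\alpha}$ with $h\in\mathcal{P}$ (principal powers), equivalently $f\in\mathcal{A}$ with $\operatorname{Re}\left[\left(\frac{f(z)}{z}\right)^{\alpha-1}f'(z)\right]>0$ in $\mathbb{D}$. For $f\in\mathcal{A}$, $P[\alpha,f](z)=1+\frac{zf''(z)}{f'(z)}+(\alpha-1)\frac{zf'(z)}{f(z)}$. *)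

theory Defs
  imports "HOL-Analysis.Analysis"
begin

definition classA :: "(complex \<Rightarrow> complex) set" where
  "classA = {f. f holomorphic_on ball 0 1 \<and> f 0 = 0 \<and> deriv f 0 = 1}"

text \<open>The class B_1(alpha): f in A with Re[(f(z)/z)^(alpha-1) f'(z)] > 0 in the disk,
  where (f(z)/z)^(alpha-1) is the analytic branch equal to 1 at z = 0, i.e.
  exp((alpha-1) g(z)) for the analytic logarithm g of f(z)/z with g(0)=0.\<close>
definition B1 :: "real \<Rightarrow> (complex \<Rightarrow> complex) set" where
  "B1 \<alpha> = {f. f \<in> classA \<and>
     (\<exists>g. g holomorphic_on ball 0 1 \<and> g 0 = 0 \<and>
          (\<forall>z\<in>ball 0 1. f z = z * exp (g z)) \<and>
          (\<forall>z\<in>ball 0 1. 0 < Re (exp (complex_of_real (\<alpha> - 1) * g z) * deriv f z)))}"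

definition Pop :: "real \<Rightarrow> (complex \<Rightarrow> complex) \<Rightarrow> complex \<Rightarrow> complex" where
  "Pop \<alpha> f z = 1 + z * deriv (deriv f) z / deriv f z
                 + complex_of_real (\<alpha> - 1) * (z * deriv f z / f z)"

end

theory Submission
  imports Defs "HOL-Complex_Analysis.Complex_Analysis"
begin

theorem mainTheorem3:
  fixes \<alpha> r \<theta>1 \<theta>2 :: real and f :: "complex \<Rightarrow> complex"
  assumes "\<alpha> > 1" and "f \<in> B1 \<alpha>" and "0 < r" and "r < 1" and "\<theta>1 < \<theta>2"
  shows "integral {\<theta>1..\<theta>2} (\<lambda>\<theta>. Re (Pop \<alpha> f (complex_of_real r * exp (\<i> * complex_of_real \<theta>)))) > - pi"
proof -
  define B :: "complex set" where "B = ball 0 1"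
  have oB: "open B" by (simp add: B_def)
  from assms(2) obtain g where fh: "f holomorphic_on B" and gh: "g holomorphic_on B"
    and fg: "\<And>z. z \<in> B \<Longrightarrow> f z = z * exp (g z)"
    and pos: "\<And>z. z \<in> B \<Longrightarrow> 0 < Re (exp (complex_of_real (\<alpha> - 1) * g z) * deriv f z)"
    unfolding B1_def classA_def B_def by blast
  define c where "c = complex_of_real (\<alpha> - 1)"
  define f' where "f' = deriv f"
  define f'' where "f'' = deriv f'"
  define g' where "g' = deriv g"
  define h where "h = (\<lambda>z. exp (c * g z) * f' z)"
  define h' where "h' = (\<lambda>z. c * g' z * exp (c * g z) * f' z + exp (c * g z) * f'' z)"
  have f'h: "f' holomorphic_on B" unfolding f'_def using fh oB by (rule holomorphic_deriv)
  have Df: "(f has_field_derivative f' z) (at z)" if "z \<in> B" for z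
    unfolding f'_def using fh oB that holomorphic_derivI by blast
  have Df': "(f' has_field_derivative f'' z) (at z)" if "z \<in> B" for z
    unfolding f''_def using f'h oB that holomorphic_derivI by blast
  have Dg: "(g has_field_derivative g' z) (at z)" if "z \<in> B" for z
    unfolding g'_def using gh oB that holomorphic_derivI by blast
  have Dh: "(h has_field_derivative h' z) (at z)" if "z \<in> B" for z
    unfolding h_def h'_def
    by (auto intro!: derivative_eq_intros Dg Df' that)
  have hpos: "0 < Re (h z)" if "z \<in> B" for z
    using pos[OF that] by (simp add: h_def c_def f'_def)
  have f'eq: "f' z = exp (g z) + z * (g' z * exp (g z))" if "z \<in> B" for z
  proof -
    have "((\<lambda>z. z * exp (g z)) has_field_derivative exp (g z) + z * (g' z * exp (g z))) (at z)"
      by (auto intro!: derivative_eq_intros Dg that)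
    then have "(f has_field_derivative exp (g z) + z * (g' z * exp (g z))) (at z)"
      by (rule has_field_derivative_transform_within_open[OF _ oB that]) (simp add: fg)
    then show ?thesis using Df[OF that] DERIV_unique by blast
  qed
  have key: "Pop \<alpha> f z = complex_of_real \<alpha> + z * h' z / h z" if "z \<in> B" "z \<noteq> 0" for z
  proof -
    have hz: "h z \<noteq> 0" using hpos[OF that(1)] by auto
    then have f'z: "f' z \<noteq> 0" by (simp add: h_def)
    have a: "complex_of_real \<alpha> = 1 + c" by (simp add: c_def)
    have "z * f' z / f z = 1 + z * g' z"
      using fg[OF that(1)] f'eq[OF that(1)] that(2) by (simp add: field_simps)
    moreover have "z * h' z / h z = c * (z * g' z) + z * f'' z / f' z"
      using f'z by (simp add: h_def h'_def field_simps)
    ultimately show ?thesis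
      unfolding Pop_def a f''_def[symmetric] f'_def[symmetric] c_def[symmetric]
      by (simp add: algebra_simps)
  qed
  define \<gamma> where "\<gamma> = (\<lambda>t::real. complex_of_real r * exp (\<i> * complex_of_real t))"
  have \<gamma>B: "\<gamma> t \<in> B" for t using assms(3,4) by (simp add: \<gamma>_def B_def norm_mult)
  have \<gamma>nz: "\<gamma> t \<noteq> 0" for t using assms(3) by (simp add: \<gamma>_def)
  have D\<gamma>: "(\<gamma> has_vector_derivative \<i> * \<gamma> t) (at t)" for t
  proof -
    have o: "((\<lambda>x. complex_of_real x) has_vector_derivative 1) (at t)"
      using has_vector_derivative_of_real[OF DERIV_ident[where F="at t"]] by simp
    have e: "((\<lambda>w. complex_of_real r * exp (\<i> * w)) has_field_derivative complex_of_real r * (exp (\<i> * complex_of_real t) * \<i>)) (at (complex_of_real t))"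
      by (auto intro!: derivative_eq_intros)
    from field_vector_diff_chain_at[OF o e] show ?thesis
      by (simp add: \<gamma>_def o_def algebra_simps)
  qed
  define \<Psi> where "\<Psi> = (\<lambda>t::real. complex_of_real (\<alpha> * t) - \<i> * Ln (h (\<gamma> t)))"
  have D\<Psi>: "(\<Psi> has_vector_derivative Pop \<alpha> f (\<gamma> t)) (at t within {\<theta>1..\<theta>2})" for t
  proof -
    have nn: "h (\<gamma> t) \<notin> \<real>\<^sub>\<le>\<^sub>0" using hpos[OF \<gamma>B[of t]]
      by (auto simp: complex_nonpos_Reals_iff)
    have "((Ln \<circ> h) has_field_derivative h' (\<gamma> t) * inverse (h (\<gamma> t))) (at (\<gamma> t))"
      using DERIV_chain[OF has_field_derivative_Ln[OF nn] Dh[OF \<gamma>B]] by (simp add: mult.commute)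
    from field_vector_diff_chain_at[OF D\<gamma> this]
    have L: "((\<lambda>t. Ln (h (\<gamma> t))) has_vector_derivative \<i> * \<gamma> t * (h' (\<gamma> t) * inverse (h (\<gamma> t)))) (at t)"
      by (simp add: o_def)
    have R: "((\<lambda>t. complex_of_real (\<alpha> * t)) has_vector_derivative complex_of_real \<alpha>) (at t)"
      unfolding has_vector_derivative_def
      by (auto intro!: derivative_eq_intros simp: scaleR_conv_of_real)
    have "(\<Psi> has_vector_derivative complex_of_real \<alpha> - \<i> * (\<i> * \<gamma> t * (h' (\<gamma> t) * inverse (h (\<gamma> t))))) (at t)"
      unfolding \<Psi>_def by (intro has_vector_derivative_diff R has_vector_derivative_mult_right L)
    moreover have "complex_of_real \<alpha> - \<i> * (\<i> * \<gamma> t * (h' (\<gamma> t) * inverse (h (\<gamma> t)))) = Pop \<alpha> f (\<gamma> t)"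
      using key[OF \<gamma>B \<gamma>nz] by (simp add: field_simps)
    ultimately show ?thesis using has_vector_derivative_at_within by metis
  qed
  have I: "((\<lambda>t. Pop \<alpha> f (\<gamma> t)) has_integral (\<Psi> \<theta>2 - \<Psi> \<theta>1)) {\<theta>1..\<theta>2}"
    using assms(5) by (intro fundamental_theorem_of_calculus D\<Psi>) auto
  have IR: "((\<lambda>t. Re (Pop \<alpha> f (\<gamma> t))) has_integral Re (\<Psi> \<theta>2 - \<Psi> \<theta>1)) {\<theta>1..\<theta>2}"
    using has_integral_linear[OF I bounded_linear_Re] by (simp add: o_def)
  have ReP: "Re (\<Psi> \<theta>2 - \<Psi> \<theta>1) = \<alpha> * (\<theta>2 - \<theta>1) + Im (Ln (h (\<gamma> \<theta>2))) - Im (Ln (h (\<gamma> \<theta>1)))"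
    by (simp add: \<Psi>_def algebra_simps)
  have b1: "\<bar>Im (Ln (h (\<gamma> \<theta>1)))\<bar> < pi/2" by (rule Re_Ln_pos_lt_imp[OF hpos[OF \<gamma>B]])
  have b2: "\<bar>Im (Ln (h (\<gamma> \<theta>2)))\<bar> < pi/2" by (rule Re_Ln_pos_lt_imp[OF hpos[OF \<gamma>B]])
  have "0 < \<alpha> * (\<theta>2 - \<theta>1)" using assms(1,5) by simp
  then have "Re (\<Psi> \<theta>2 - \<Psi> \<theta>1) > - pi" using ReP b1 b2 by linarith
  then show ?thesis using integral_unique[OF IR] by (simp add: \<gamma>_def)
qed

end
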